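(* Let $n\ge 1$, let $\mathbf{A}\in\mathbb{R}^{n\times n}$ be symmetric positive semidefinite, $\mathbf{b}\in\mathbb{R}^n$, and let $h(\mathbf{x})=\sum_{i=1}^n \varphi(\mathbf{x}_i)$, where $\varphi:\mathbb{R}\to\mathbb{R}\cup\{+\infty\}$ is proper, lower semicontinuous and convex. Put $f(\mathbf{x})=\tfrac12\mathbf{x}^T\mathbf{A}\mathbf{x}+\mathbf{x}^T\mathbf{b}+h(\mathbf{x})$. Write $\mathbf{A}=\mathbf{L}+\mathbf{D}+\mathbf{L}^T$, where $\mathbf{D}$ is the diagonal part and $\mathbf{L}$ the strictly lower triangular part of $\mathbf{A}$. Fix $\omega\in(0,2)$ and $\theta\in[0,\infty)$ with $\mathbf{D}_{i,i}+\theta>0$ for all $i$. Set $\mathbf{B}=\mathbf{L}+\tfrac1\omega(\mathbf{D}+\theta\mathbf{I})$ and $\mathbf{C}=\mathbf{L}^T+\tfrac1\omega((\omega-1)\mathbf{D}-\theta\mathbf{I})$, so that $\mathbf{A}=\mathbf{B}+\mathbf{C}$. For $\mathbf{x}\in\mathbb{R}^n$ let $\mathcal{T}(\mathbf{x})$ be the unique $\mathbf{z}\in\mathbb{R}^n$ with $\mathbf{0}\in\mathbf{B}\mathbf{z}+\mathbf{b}+\mathbf{C}\mathbf{x}+\partial h(\mathbf{z})$. Then for all $\mathbf{x},\mathbf{y}\in\mathbb{R}^n$: (a) there exists $\mathbf{v}\in\partial h(\mathcal{T}(\mathbf{x}))$ such that $\|\mathbf{A}\mathcal{T}(\mathbf{x})+\mathbf{b}+\mathbf{v}\|\le\|\mathbf{C}\|\,\|\mathbf{x}-\mathcal{T}(\mathbf{x})\|$;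 (b) $f(\mathcal{T}(\mathbf{y}))-f(\mathbf{x})\le\langle\mathcal{T}(\mathbf{y})-\mathbf{x},\,\mathbf{C}(\mathcal{T}(\mathbf{y})-\mathbf{y})\rangle-\tfrac12(\mathbf{x}-\mathcal{T}(\mathbf{y}))^T\mathbf{A}(\mathbf{x}-\mathcal{T}(\mathbf{y}))$.
   Context: $\partial h$ denotes the convex subdifferential. $\|\cdot\|$ is the Euclidean norm on vectors and the spectral norm (largest singular value) on matrices. Since $\mathbf{B}$ is lower triangular with positive diagonal and $h$ is separable, $\mathcal{T}(\mathbf{x})$ is well defined and can be computed by forward substitution: with $\mathbf{u}=\mathbf{b}+\mathbf{C}\mathbf{x}$, for $j=1,\dots,n$, $\mathbf{z}_j=\arg\min_t \tfrac12\mathbf{B}_{j,j}t^2+(\mathbf{u}_j+\sum_{i<j}\mathbf{B}_{j,i}\mathbf{z}_i)t+\varphi(t)$. *)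

theory Defs
  imports "HOL-Analysis.Analysis"
begin

definition proper_fun :: "(real \<Rightarrow> ereal) \<Rightarrow> bool" where
  "proper_fun \<phi> \<longleftrightarrow> (\<forall>t. \<phi> t \<noteq> -\<infinity>) \<and> (\<exists>t. \<phi> t \<noteq> \<infinity>)"

definition lsc_fun :: "(real \<Rightarrow> ereal) \<Rightarrow> bool" where
  "lsc_fun \<phi> \<longleftrightarrow> (\<forall>t. \<phi> t \<le> Liminf (at t) \<phi>)"

definition convex_ext :: "(real \<Rightarrow> ereal) \<Rightarrow> bool" where
  "convex_ext \<phi> \<longleftrightarrow> (\<forall>s t u. 0 < u \<and> u < 1 \<longrightarrow>
      \<phi> (u * s + (1 - u) * t) \<le> ereal u * \<phi> s + ereal (1 - u) * \<phi> t)"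

definition sep_fun :: "(real \<Rightarrow> ereal) \<Rightarrow> real^('n::{finite,linorder}) \<Rightarrow> ereal" where
  "sep_fun \<phi> x = (\<Sum>i\<in>UNIV. \<phi> (x $ i))"

definition subdiff :: "('a::real_inner \<Rightarrow> ereal) \<Rightarrow> 'a \<Rightarrow> 'a set" where
  "subdiff h z = {v. \<forall>w. h z + ereal (inner v (w - z)) \<le> h w}"

definition diag_part :: "real^('n::{finite,linorder})^('n::{finite,linorder}) \<Rightarrow> real^('n::{finite,linorder})^('n::{finite,linorder})" where
  "diag_part A = (\<chi> i j. if i = j then A $ i $ j else 0)"

definition strict_lower :: "real^('n::{finite,linorder})^('n::{finite,linorder}) \<Rightarrow> real^('n::{finite,linorder})^('n::{finite,linorder})" where
  "strict_lower A = (\<chi> i j. if j < i then A $ i $ j else 0)"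

definition sor_B :: "real^('n::{finite,linorder})^('n::{finite,linorder}) \<Rightarrow> real \<Rightarrow> real \<Rightarrow> real^('n::{finite,linorder})^('n::{finite,linorder})" where
  "sor_B A \<omega> \<theta> = strict_lower A + (1/\<omega>) *\<^sub>R (diag_part A + \<theta> *\<^sub>R mat 1)"

definition sor_C :: "real^('n::{finite,linorder})^('n::{finite,linorder}) \<Rightarrow> real \<Rightarrow> real \<Rightarrow> real^('n::{finite,linorder})^('n::{finite,linorder})" where
  "sor_C A \<omega> \<theta> = transpose (strict_lower A)
      + (1/\<omega>) *\<^sub>R ((\<omega> - 1) *\<^sub>R diag_part A - \<theta> *\<^sub>R mat 1)"

definition sor_T :: "real^('n::{finite,linorder})^('n::{finite,linorder}) \<Rightarrow> real^('n::{finite,linorder}) \<Rightarrow> (real \<Rightarrow> ereal) \<Rightarrow> real \<Rightarrow> real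
     \<Rightarrow> real^('n::{finite,linorder}) \<Rightarrow> real^('n::{finite,linorder})" where
  "sor_T A b \<phi> \<omega> \<theta> x = (THE z. - (sor_B A \<omega> \<theta> *v z + b + sor_C A \<omega> \<theta> *v x) \<in> subdiff (sep_fun \<phi>) z)"

definition obj_f :: "real^('n::{finite,linorder})^('n::{finite,linorder}) \<Rightarrow> real^('n::{finite,linorder}) \<Rightarrow> (real \<Rightarrow> ereal) \<Rightarrow> real^('n::{finite,linorder}) \<Rightarrow> ereal" where
  "obj_f A b \<phi> x = ereal (1/2 * inner x (A *v x) + inner x b) + sep_fun \<phi> x"

end

theory Submission imports Defs begin

lemma lsc_nbhd:
  assumes "lsc_fun \<phi>" "ereal c < \<phi> t"
  shows "\<exists>e>0. \<forall>y. dist y t < e \<longrightarrow> ereal c < \<phi> y"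
proof -
  have "\<phi> t \<le> Liminf (at t) \<phi>" using assms(1) unfolding lsc_fun_def by blast
  hence "\<phi> t = min (\<phi> t) (Liminf (at t) \<phi>)" by simp
  also have "\<dots> = (SUP e\<in>{0<..}. INF y\<in>ball t e. \<phi> y)" by (rule min_Liminf_at)
  finally have "ereal c < (SUP e\<in>{0<..}. INF y\<in>ball t e. \<phi> y)" using assms(2) by simp
  then obtain e where e: "e > 0" "ereal c < (INF y\<in>ball t e. \<phi> y)"
    by (auto simp: less_SUP_iff)
  have "\<forall>y. dist y t < e \<longrightarrow> ereal c < \<phi> y"
  proof (intro allI impI)
    fix y assume "dist y t < e"
    hence "y \<in> ball t e" by (simp add: dist_commute)
    thus "ereal c < \<phi> y" using e(2) by (simp add: less_INF_D)
  qed
  thus ?thesis using e(1) by blast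
qed

lemma compact_min:
  fixes g :: "real \<Rightarrow> ereal"
  assumes K: "compact K" "K \<noteq> {}"
    and l: "\<forall>t\<in>K. \<forall>c. ereal c < g t \<longrightarrow> (\<exists>e>0. \<forall>y. dist y t < e \<longrightarrow> ereal c < g y)"
  shows "\<exists>t\<in>K. \<forall>y\<in>K. g t \<le> g y"
proof (rule ccontr)
  assume nc: "\<not> ?thesis"
  define m where "m = (INF y\<in>K. g y)"
  have "\<forall>t\<in>K. \<exists>c. m < ereal c \<and> ereal c < g t"
  proof
    fix t assume t: "t \<in> K"
    then obtain y where y: "y \<in> K" "g y < g t" using nc by (auto simp: not_le)
    have "m \<le> g y" unfolding m_def using y(1) by (rule INF_lower)
    hence "m < g t" using y(2) by simp
    thus "\<exists>c. m < ereal c \<and> ereal c < g t" by (rule ereal_dense2)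
  qed
  then obtain c where c: "\<forall>t\<in>K. m < ereal (c t) \<and> ereal (c t) < g t" by metis
  have "\<forall>t\<in>K. \<exists>e>0. \<forall>y. dist y t < e \<longrightarrow> ereal (c t) < g y" using c l by blast
  then obtain e where e: "\<forall>t\<in>K. e t > 0 \<and> (\<forall>y. dist y t < e t \<longrightarrow> ereal (c t) < g y)" by metis
  have "K \<subseteq> (\<Union>t\<in>K. ball t (e t))" using e by force
  then obtain C where C: "C \<subseteq> K" "finite C" "K \<subseteq> (\<Union>t\<in>C. ball t (e t))"
    using compactE_image[OF K(1), of K "\<lambda>t. ball t (e t)"] by blast
  have "C \<noteq> {}" using C(3) K(2) by auto
  define c0 where "c0 = Min (c ` C)"
  have c0in: "c0 \<in> c ` C" unfolding c0_def using C(2) \<open>C \<noteq> {}\<close> by (intro Min_in) auto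
  have "ereal c0 \<le> m" unfolding m_def
  proof (rule INF_greatest)
    fix y assume "y \<in> K"
    then obtain t where t: "t \<in> C" "y \<in> ball t (e t)" using C(3) by blast
    hence "ereal (c t) < g y" using e C(1) by (auto simp: dist_commute)
    moreover have "c0 \<le> c t" unfolding c0_def using t(1) C(2) by simp
    ultimately show "ereal c0 \<le> g y" by (meson ereal_less_eq(3) less_imp_le order_trans)
  qed
  moreover obtain t1 where "t1 \<in> C" "c0 = c t1" using c0in by blast
  hence "m < ereal c0" using c C(1) by auto
  ultimately show False by simp
qed


lemma ereal_cases_fin: "(\<phi>::ereal) \<noteq> \<infinity> \<Longrightarrow> \<phi> \<noteq> -\<infinity> \<Longrightarrow> \<exists>r. \<phi> = ereal r"
  by (cases \<phi>) auto

lemma phi_lower: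
  assumes proper: "proper_fun \<phi>" and lsc: "lsc_fun \<phi>" and cvx: "convex_ext \<phi>"
    and t0: "\<phi> t0 = ereal p0"
  shows "\<exists>M L. L \<ge> 0 \<and> M \<le> p0 \<and> (\<forall>y. ereal (M - L * \<bar>y - t0\<bar>) \<le> \<phi> y)"
proof -
  have ninf: "\<And>t. \<phi> t \<noteq> -\<infinity>" using proper unfolding proper_fun_def by blast
  have "\<exists>t\<in>cball t0 1. \<forall>y\<in>cball t0 1. \<phi> t \<le> \<phi> y"
    by (rule compact_min) (auto intro: lsc_nbhd[OF lsc])
  then obtain tm where tm: "tm \<in> cball t0 1" "\<forall>y\<in>cball t0 1. \<phi> tm \<le> \<phi> y" by blast
  have "\<phi> tm \<le> \<phi> t0" using tm by simp
  then obtain M where M: "\<phi> tm = ereal M" using t0 ninf[of tm] by (cases "\<phi> tm") auto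
  have Mp: "M \<le> p0" using \<open>\<phi> tm \<le> \<phi> t0\<close> M t0 by simp
  define L where "L = p0 - M"
  have "\<forall>y. ereal (M - L * \<bar>y - t0\<bar>) \<le> \<phi> y"
  proof
    fix y
    show "ereal (M - L * \<bar>y - t0\<bar>) \<le> \<phi> y"
    proof (cases "\<phi> y = \<infinity>")
      case True thus ?thesis by simp
    next
      case False
      then obtain r where r: "\<phi> y = ereal r" using ninf[of y] by (cases "\<phi> y") auto
      show ?thesis
      proof (cases "\<bar>y - t0\<bar> \<le> 1")
        case True
        hence "ereal M \<le> \<phi> y" using tm(2) M by (auto simp: dist_real_def abs_minus_commute)
        moreover have "M - L * \<bar>y - t0\<bar> \<le> M" using Mp L_def by simp
        ultimately show ?thesis using r by simp
      next
        case False
        define d where "d = \<bar>y - t0\<bar>"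
        have d1: "d > 1" using False d_def by simp
        define u where "u = 1 / d"
        have u: "0 < u" "u < 1" using d1 u_def by auto
        define p where "p = u * y + (1 - u) * t0"
        have "p - t0 = u * (y - t0)" unfolding p_def by (simp add: algebra_simps)
        hence "\<bar>p - t0\<bar> = 1" using d1 u_def d_def by (simp add: abs_mult)
        hence "ereal M \<le> \<phi> p" using tm(2) M by (auto simp: dist_real_def abs_minus_commute)
        also have "\<phi> p \<le> ereal u * \<phi> y + ereal (1 - u) * \<phi> t0"
          using cvx u unfolding convex_ext_def p_def by blast
        also have "\<dots> = ereal (u * r + (1 - u) * p0)" using r t0 by simp
        finally have "M \<le> u * r + (1 - u) * p0" by simp
        hence "d * M \<le> d * (u * r + (1 - u) * p0)" using d1 by simp
        also have "\<dots> = (d * u) * r + d * p0 - (d * u) * p0" by (simp add: algebra_simps)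
        also have "\<dots> = r + (d - 1) * p0" using d1 u_def by (simp add: algebra_simps)
        finally have "d * M \<le> r + (d - 1) * p0" .
        hence "M - L * d \<le> r" unfolding L_def using d1 Mp
          by (simp add: algebra_simps)
        thus ?thesis using r d_def by simp
      qed
    qed
  qed
  moreover have "L \<ge> 0" using L_def Mp by simp
  ultimately show ?thesis using Mp by blast
qed


lemma quad_cont:
  fixes \<beta> a :: real assumes "\<delta> > 0"
  shows "\<exists>e>0. \<forall>y. dist y t < e \<longrightarrow> \<bar>(\<beta>/2*y^2 + a*y) - (\<beta>/2*t^2 + a*t)\<bar> < \<delta>"
proof -
  have "isCont (\<lambda>y. \<beta>/2*y^2 + a*y) t" by (intro continuous_intros)
  hence "(\<lambda>y. \<beta>/2*y^2 + a*y) \<midarrow>t\<rightarrow> (\<beta>/2*t^2 + a*t)" by (simp add: isCont_def)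
  then obtain s where s: "s > 0" "\<forall>x. x \<noteq> t \<and> norm (x - t) < s \<longrightarrow> norm ((\<beta>/2*x^2 + a*x) - (\<beta>/2*t^2 + a*t)) < \<delta>"
    using assms unfolding LIM_eq by blast
  show ?thesis
  proof (intro exI[of _ s] conjI allI impI)
    fix y assume "dist y t < s"
    thus "\<bar>(\<beta>/2*y^2 + a*y) - (\<beta>/2*t^2 + a*t)\<bar> < \<delta>"
      using s assms by (cases "y = t") (auto simp: dist_real_def)
  qed (rule s(1))
qed

lemma g_lsc:
  fixes \<beta> a :: real
  assumes lsc: "lsc_fun \<phi>" and ninf: "\<And>t. \<phi> t \<noteq> -\<infinity>"
    and c: "ereal c < ereal (\<beta>/2*t^2 + a*t) + \<phi> t"
  shows "\<exists>e>0. \<forall>y. dist y t < e \<longrightarrow> ereal c < ereal (\<beta>/2*y^2 + a*y) + \<phi> y"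
proof -
  define qt where "qt = \<beta>/2*t^2 + a*t"
  have "ereal (c - qt) < \<phi> t" using c ninf[of t] unfolding qt_def by (cases "\<phi> t") auto
  then obtain z where z: "ereal (c - qt) < ereal z" "ereal z < \<phi> t" using ereal_dense2 by blast
  define \<delta> where "\<delta> = z - (c - qt)"
  have d: "\<delta> > 0" using z(1) \<delta>_def by simp
  obtain e1 where e1: "e1 > 0" "\<forall>y. dist y t < e1 \<longrightarrow> ereal z < \<phi> y" using lsc_nbhd[OF lsc z(2)] by blast
  obtain e2 where e2: "e2 > 0" "\<forall>y. dist y t < e2 \<longrightarrow> \<bar>(\<beta>/2*y^2 + a*y) - qt\<bar> < \<delta>"
    using quad_cont[OF d, of t \<beta> a] unfolding qt_def by blast
  show ?thesis
  proof (intro exI[of _ "min e1 e2"] conjI allI impI)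
    fix y assume y: "dist y t < min e1 e2"
    have "ereal z < \<phi> y" using e1 y by simp
    moreover have "\<bar>(\<beta>/2*y^2 + a*y) - qt\<bar> < \<delta>" using e2 y by simp
    ultimately show "ereal c < ereal (\<beta>/2*y^2 + a*y) + \<phi> y"
      using ninf[of y] \<delta>_def by (cases "\<phi> y") auto
  qed (use e1 e2 in simp)
qed

lemma coerc:
  fixes \<beta> P L x :: real
  assumes "\<beta> > 0" "P \<ge> 0" "L \<ge> 0" "\<bar>x\<bar> \<ge> 2*(P+1)/\<beta> + L + 1"
  shows "\<beta>/2*x^2 - P*\<bar>x\<bar> - L > 0"
proof -
  define r where "r = \<bar>x\<bar>"
  have r0: "r \<ge> 0" using r_def by simp
  have "r \<ge> 2*(P+1)/\<beta>" using assms r_def by (smt (verit, best) divide_nonneg_pos)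
  hence "\<beta> * r \<ge> 2*(P+1)" using assms(1) by (simp add: field_simps)
  hence "\<beta>/2 * r \<ge> P + 1" by simp
  hence "(\<beta>/2 * r) * r \<ge> (P+1) * r" using r0 by (rule mult_right_mono)
  moreover have "x^2 = r*r" using r_def by (simp add: power2_eq_square abs_mult_self_eq)
  moreover have "r > L" using assms r_def by (smt (verit, best) divide_nonneg_pos)
  ultimately show ?thesis unfolding r_def[symmetric] by (simp add: algebra_simps)
qed


lemma exist1d:
  fixes \<beta> a :: real
  assumes b: "\<beta> > 0" and proper: "proper_fun \<phi>" and lsc: "lsc_fun \<phi>" and cvx: "convex_ext \<phi>"
  shows "\<exists>t. \<phi> t \<noteq> \<infinity> \<and> (\<forall>w. \<phi> t + ereal (-(\<beta>*t+a)*(w - t)) \<le> \<phi> w)"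
proof -
  have ninf: "\<And>t. \<phi> t \<noteq> -\<infinity>" using proper unfolding proper_fun_def by blast
  obtain t0 where "\<phi> t0 \<noteq> \<infinity>" using proper unfolding proper_fun_def by blast
  then obtain p0 where t0: "\<phi> t0 = ereal p0" using ninf[of t0] by (cases "\<phi> t0") auto
  obtain M L where hML: "L \<ge> 0" "M \<le> p0" "\<forall>y. ereal (M - L * \<bar>y - t0\<bar>) \<le> \<phi> y"
    using phi_lower[OF proper lsc cvx t0] by blast
  define q where "q y = \<beta>/2*y^2 + a*y" for y
  define g where "g y = ereal (q y) + \<phi> y" for y
  define P where "P = \<bar>\<beta>*t0 + a\<bar> + L"
  define Q where "Q = p0 - M"
  define R where "R = 2*(P+1)/\<beta> + Q + 1"
  have far: "g t0 < g y" if y: "\<bar>y - t0\<bar> \<ge> R" for y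
  proof -
    define sv where "sv = y - t0"
    have "\<beta>/2* sv^2 - P*\<bar>sv\<bar> - Q > 0"
      using coerc[OF b _ _ y[unfolded R_def]] P_def Q_def hML sv_def by simp
    moreover have "q y - q t0 = \<beta>/2* sv^2 + (\<beta>*t0 + a)* sv" unfolding q_def sv_def
      by (simp add: algebra_simps power2_eq_square)
    moreover have "(\<beta>*t0 + a)* sv \<ge> - \<bar>\<beta>*t0 + a\<bar> * \<bar>sv\<bar>"
      by (metis abs_ge_minus_self abs_mult minus_le_iff mult_minus_left)
    ultimately have "q t0 + p0 < q y + (M - L * \<bar>sv\<bar>)" unfolding P_def Q_def
      by (simp add: algebra_simps)
    hence "ereal (q t0 + p0) < ereal (q y) + ereal (M - L * \<bar>sv\<bar>)" by simp
    also have "\<dots> \<le> ereal (q y) + \<phi> y" using hML(3) sv_def by (intro add_left_mono) auto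
    finally show ?thesis unfolding g_def using t0 by simp
  qed
  have "Q \<ge> 0" "P \<ge> 0" using Q_def hML P_def by auto
  hence R0: "R \<ge> 0" unfolding R_def using b by (smt (verit) divide_nonneg_pos)
  have "\<exists>t\<in>cball t0 R. \<forall>y\<in>cball t0 R. g t \<le> g y"
  proof (rule compact_min)
    show "cball t0 R \<noteq> {}" using R0 by simp
    show "\<forall>t\<in>cball t0 R. \<forall>c. ereal c < g t \<longrightarrow> (\<exists>e>0. \<forall>y. dist y t < e \<longrightarrow> ereal c < g y)"
      unfolding g_def q_def using g_lsc[OF lsc ninf] by blast
  qed simp
  then obtain ts where ts: "ts \<in> cball t0 R" "\<forall>y\<in>cball t0 R. g ts \<le> g y" by blast
  have gmin: "g ts \<le> g y" for y
  proof (cases "y \<in> cball t0 R")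
    case True thus ?thesis using ts by simp
  next
    case False
    hence "\<bar>y - t0\<bar> \<ge> R" by (simp add: dist_real_def)
    hence "g t0 < g y" by (rule far)
    moreover have "g ts \<le> g t0" using ts R0 by simp
    ultimately show ?thesis by simp
  qed
  have "g ts \<le> g t0" by (rule gmin)
  hence "\<phi> ts \<noteq> \<infinity>" unfolding g_def using t0 by auto
  then obtain rs where rs: "\<phi> ts = ereal rs" using ninf[of ts] by (cases "\<phi> ts") auto
  define sg where "sg = -(\<beta>*ts+a)"
  have "\<forall>w. \<phi> ts + ereal (sg*(w - ts)) \<le> \<phi> w"
  proof
    fix w
    show "\<phi> ts + ereal (sg*(w - ts)) \<le> \<phi> w"
    proof (cases "\<phi> w")
      case PInf thus ?thesis by simp
    next
      case MInf thus ?thesis using ninf by simp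
    next
      case (real rw)
      show ?thesis
      proof (rule ccontr)
        assume "\<not> ?thesis"
        hence dpos: "rs + sg*(w - ts) - rw > 0" using rs real by simp
        define \<delta> where "\<delta> = rs + sg*(w - ts) - rw"
        define d where "d = w - ts"
        have dnz: "d \<noteq> 0" using dpos d_def rs real by auto
        have dd: "d*d > 0" using dnz by (simp add: zero_less_mult_iff linorder_neq_iff disj_commute)
        define u where "u = min (1/2) (\<delta> / (\<beta>*(d*d)))"
        have u: "0 < u" "u < 1" using dpos b dd \<delta>_def u_def by auto
        have ule: "u * (\<beta>*(d*d)) \<le> \<delta>"
          using b dd u_def dnz by (simp add: min_def field_simps split: if_splits)
        define p where "p = u * w + (1 - u) * ts"
        have "\<phi> p \<le> ereal u * \<phi> w + ereal (1 - u) * \<phi> ts"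
          using cvx u unfolding convex_ext_def p_def by blast
        also have "\<dots> = ereal (u * rw + (1 - u) * rs)" using rs real by simp
        finally have php: "\<phi> p \<le> ereal (u * rw + (1 - u) * rs)" .
        have "g ts \<le> g p" by (rule gmin)
        also have "\<dots> \<le> ereal (q p) + ereal (u * rw + (1 - u) * rs)" unfolding g_def
          using php by (intro add_left_mono)
        finally have ineq: "q ts + rs \<le> q p + (u * rw + (1 - u) * rs)" unfolding g_def using rs by simp
        have "q p - q ts = -sg*u*d + \<beta>/2*u^2*(d*d)" unfolding q_def p_def sg_def d_def
          by (simp add: algebra_simps power2_eq_square)
        hence "u * rs \<le> u * (rw - sg*d) + \<beta>/2*u^2*(d*d)" using ineq by (simp add: algebra_simps)
        hence "u * (rs + sg*d - rw) \<le> u * (\<beta>/2*u*(d*d))" by (simp add: algebra_simps power2_eq_square)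
        hence "rs + sg*d - rw \<le> \<beta>/2*u*(d*d)" using u by simp
        also have "\<beta>/2*u*(d*d) = (u * (\<beta>*(d*d)))/2" by simp
        finally have "\<delta> \<le> (u * (\<beta>*(d*d)))/2" using \<delta>_def d_def by simp
        hence "\<delta> \<le> \<delta>/2" using ule by linarith
        thus False using dpos \<delta>_def by simp
      qed
    qed
  qed
  thus ?thesis using \<open>\<phi> ts \<noteq> \<infinity>\<close> sg_def by blast
qed


lemma sorB_entry: "sor_B A \<omega> \<theta> $ i $ j = (if j < i then A$i$j else 0) + (if i = j then (A$i$j + \<theta>)/\<omega> else 0)"
  by (simp add: sor_B_def strict_lower_def diag_part_def mat_def add_divide_distrib)

lemma sep_ninf:
  assumes "\<And>t. \<phi> t \<noteq> -\<infinity>" shows "sep_fun \<phi> z \<noteq> -\<infinity>"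
proof -
  have "\<And>S. (\<Sum>i\<in>S. \<phi> (z $ i)) \<noteq> -\<infinity>"
  proof -
    fix S :: "'a set"
    show "(\<Sum>i\<in>S. \<phi> (z $ i)) \<noteq> -\<infinity>"
      by (induct S rule: infinite_finite_induct) (auto simp: assms ereal_plus_eq_MInfty)
  qed
  thus ?thesis unfolding sep_fun_def by blast
qed

lemma sep_subdiff_fin:
  fixes z v :: "real^('n::{finite,linorder})"
  assumes proper: "proper_fun \<phi>" and v: "v \<in> subdiff (sep_fun \<phi>) z"
  shows "\<exists>r. sep_fun \<phi> z = ereal r"
proof -
  have ninf: "\<And>t. \<phi> t \<noteq> -\<infinity>" using proper unfolding proper_fun_def by blast
  obtain t0 where t0: "\<phi> t0 \<noteq> \<infinity>" using proper unfolding proper_fun_def by blast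
  define w where "w = ((\<chi> i. t0) :: real^('n::{finite,linorder}))"
  have "sep_fun \<phi> w \<noteq> \<infinity>" unfolding sep_fun_def w_def using t0 by (simp add: sum_Pinfty)
  moreover have "sep_fun \<phi> z + ereal (inner v (w - z)) \<le> sep_fun \<phi> w"
    using v unfolding subdiff_def by blast
  ultimately have "sep_fun \<phi> z \<noteq> \<infinity>" by auto
  thus ?thesis using sep_ninf[of \<phi> z, OF ninf] by (cases "sep_fun \<phi> z") auto
qed

lemma sub_sep:
  fixes z s :: "real^('n::{finite,linorder})"
  assumes ninf: "\<And>t. \<phi> t \<noteq> -\<infinity>"
    and c: "\<forall>j. \<phi> (z$j) \<noteq> \<infinity> \<and> (\<forall>w. \<phi> (z$j) + ereal (s$j * (w - z$j)) \<le> \<phi> w)"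
  shows "s \<in> subdiff (sep_fun \<phi>) z"
proof -
  have "\<forall>j. \<exists>r. \<phi> (z$j) = ereal r" using c ninf by (metis ereal_cases_fin)
  then obtain r where r: "\<And>j. \<phi> (z$j) = ereal (r j)" by metis
  show ?thesis unfolding subdiff_def
  proof (safe)
    fix w
    have "sep_fun \<phi> z + ereal (inner s (w - z)) = (\<Sum>j\<in>UNIV. ereal (r j + s$j * (w$j - z$j)))"
      unfolding sep_fun_def by (simp add: r inner_vec_def sum.distrib)
    also have "\<dots> \<le> (\<Sum>j\<in>UNIV. \<phi> (w$j))"
    proof (rule sum_mono)
      fix j show "ereal (r j + s$j * (w$j - z$j)) \<le> \<phi> (w$j)"
        using c r[of j] by (metis plus_ereal.simps(1))
    qed
    finally show "sep_fun \<phi> z + ereal (inner s (w - z)) \<le> sep_fun \<phi> w" unfolding sep_fun_def .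
  qed
qed


lemma T_exists:
  fixes A :: "real^('n::{finite,linorder})^('n::{finite,linorder})" and c :: "real^('n::{finite,linorder})"
  assumes proper: "proper_fun \<phi>" and lsc: "lsc_fun \<phi>" and cvx: "convex_ext \<phi>"
    and omega: "0 < \<omega>" and diagpos: "\<forall>i. A $ i $ i + \<theta> > 0"
  shows "\<exists>z. - (sor_B A \<omega> \<theta> *v z + c) \<in> subdiff (sep_fun \<phi>) z"
proof -
  have ninf: "\<And>t. \<phi> t \<noteq> -\<infinity>" using proper unfolding proper_fun_def by blast
  define B where "B = sor_B A \<omega> \<theta>"
  define cond where "cond z j = (\<phi> (z$j) \<noteq> \<infinity> \<and> (\<forall>w. \<phi> (z$j) + ereal ((-(B *v z + c))$j * (w - z$j)) \<le> \<phi> w))"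
    for z :: "real^('n::{finite,linorder})" and j
  have ex: "\<exists>z. \<forall>j\<in>S. cond z j" if "finite S" for S
    using that
  proof (induct S rule: finite_linorder_max_induct)
    case empty thus ?case by simp
  next
    case (insert b S)
    then obtain z where z: "\<forall>j\<in>S. cond z j" by blast
    define \<beta> where "\<beta> = B$b$b"
    have bpos: "\<beta> > 0" unfolding \<beta>_def B_def sorB_entry using diagpos omega by simp
    define a where "a = c$b + (\<Sum>i\<in>UNIV-{b}. B$b$i * z$i)"
    obtain t where t: "\<phi> t \<noteq> \<infinity>" "\<forall>w. \<phi> t + ereal (-(\<beta>*t+a)*(w - t)) \<le> \<phi> w"
      using exist1d[where a=a, OF bpos proper lsc cvx] by auto
    define z' where "z' = (\<chi> i. if i = b then t else z$i)"
    have Bb: "(B *v z')$b = \<beta>*t + (\<Sum>i\<in>UNIV-{b}. B$b$i * z$i)"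
      unfolding matrix_vector_mult_def z'_def \<beta>_def
      by (simp add: sum.remove[of UNIV b])
    have Bj: "(B *v z')$j = (B *v z)$j" if "j \<in> S" for j
    proof -
      have "j < b" using insert(2) that by blast
      hence eq: "B$j$i * z'$i = B$j$i * z$i" for i
        unfolding z'_def B_def by (auto simp: sorB_entry)
      have "(\<Sum>i\<in>UNIV. B$j$i * z'$i) = (\<Sum>i\<in>UNIV. B$j$i * z$i)" by (rule sum.cong[OF refl eq])
      thus ?thesis unfolding matrix_vector_mult_def by simp
    qed
    have "\<forall>j\<in>insert b S. cond z' j"
    proof
      fix j assume j: "j \<in> insert b S"
      show "cond z' j"
      proof (cases "j = b")
        case True
        have e1: "(-(B *v z' + c))$j = -(\<beta>*t+a)" using True Bb unfolding a_def by simp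
        have e2: "z'$j = t" using True unfolding z'_def by simp
        show ?thesis unfolding cond_def e1 e2 using t by simp
      next
        case False
        hence jS: "j \<in> S" using j by simp
        have e2: "z'$j = z$j" using False unfolding z'_def by simp
        have e1: "(-(B *v z' + c))$j = (-(B *v z + c))$j" using Bj[OF jS] by simp
        show ?thesis using z jS unfolding cond_def e1 e2 by simp
      qed
    qed
    thus ?case by blast
  qed
  obtain z where "\<forall>j\<in>UNIV. cond z j" using ex[of UNIV] by auto
  hence "- (B *v z + c) \<in> subdiff (sep_fun \<phi>) z"
    by (intro sub_sep[OF ninf]) (auto simp: cond_def)
  thus ?thesis unfolding B_def by blast
qed


lemma B_posdef:
  fixes A :: "real^('n::{finite,linorder})^('n::{finite,linorder})" and d :: "real^('n::{finite,linorder})"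
  assumes sym: "transpose A = A"
    and psd: "\<forall>x. 0 \<le> inner x (A *v x)"
    and omega: "0 < \<omega>" "\<omega> < 2"
    and theta: "0 \<le> \<theta>"
    and diagpos: "\<forall>i. A $ i $ i + \<theta> > 0"
    and dnz: "d \<noteq> 0"
  shows "inner d (sor_B A \<omega> \<theta> *v d) > 0"
proof -
  have symij: "A$j$i = A$i$j" for i j
    using sym by (metis transpose_def vec_lambda_beta)
  define F where "F i j = d$i * A$i$j * d$j" for i j
  define Slt where "Slt = (\<Sum>i\<in>UNIV. \<Sum>j\<in>UNIV. if j < i then F i j else 0)"
  have hA: "inner d (A *v d) = (\<Sum>i\<in>UNIV. \<Sum>j\<in>UNIV. F i j)"
    unfolding inner_vec_def matrix_vector_mult_def F_def by (simp add: sum_distrib_left mult.assoc)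
  have split: "(\<Sum>j\<in>UNIV. F i j) = (\<Sum>j\<in>UNIV. if j < i then F i j else 0) + (\<Sum>j\<in>UNIV. if i < j then F i j else 0) + F i i" for i
  proof -
    have "(\<Sum>j\<in>UNIV. F i j) = (\<Sum>j\<in>UNIV. (if j < i then F i j else 0) + (if i < j then F i j else 0) + (if i = j then F i j else 0))"
      by (rule sum.cong) auto
    thus ?thesis by (simp add: sum.distrib)
  qed
  have swap: "(\<Sum>i\<in>UNIV. \<Sum>j\<in>UNIV. if i < j then F i j else 0) = Slt"
  proof -
    have "(\<Sum>i\<in>UNIV. \<Sum>j\<in>UNIV. if i < j then F i j else 0) = (\<Sum>j\<in>UNIV. \<Sum>i\<in>UNIV. if i < j then F i j else 0)"
      by (rule sum.swap)
    also have "\<dots> = (\<Sum>j\<in>UNIV. \<Sum>i\<in>UNIV. if i < j then F j i else 0)"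
    proof (rule sum.cong[OF refl], rule sum.cong[OF refl])
      fix j i
      have "F i j = F j i" unfolding F_def using symij[of i j] by simp
      thus "(if i < j then F i j else 0) = (if i < j then F j i else 0)" by simp
    qed
    finally show ?thesis unfolding Slt_def .
  qed
  have hA2: "inner d (A *v d) = 2 * Slt + (\<Sum>i\<in>UNIV. A$i$i * (d$i)^2)"
  proof -
    have "inner d (A *v d) = Slt + (\<Sum>i\<in>UNIV. \<Sum>j\<in>UNIV. if i < j then F i j else 0) + (\<Sum>i\<in>UNIV. F i i)"
      unfolding hA split sum.distrib Slt_def by simp
    also have "\<dots> = 2 * Slt + (\<Sum>i\<in>UNIV. F i i)" unfolding swap by simp
    finally show ?thesis unfolding F_def by (simp add: power2_eq_square mult_ac)
  qed
  have hB: "inner d (sor_B A \<omega> \<theta> *v d) = Slt + (\<Sum>i\<in>UNIV. (A$i$i + \<theta>)/\<omega> * (d$i)^2)"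
  proof -
    have row: "(\<Sum>j\<in>UNIV. sor_B A \<omega> \<theta> $ i $ j * d$j) = (\<Sum>j\<in>UNIV. if j < i then A$i$j * d$j else 0) + (A$i$i + \<theta>)/\<omega> * d$i" for i
    proof -
      have "(\<Sum>j\<in>UNIV. sor_B A \<omega> \<theta> $ i $ j * d$j) = (\<Sum>j\<in>UNIV. (if j < i then A$i$j * d$j else 0) + (if i = j then (A$i$j + \<theta>)/\<omega> * d$j else 0))"
        by (rule sum.cong) (auto simp: sorB_entry distrib_right)
      thus ?thesis by (simp add: sum.distrib)
    qed
    have "inner d (sor_B A \<omega> \<theta> *v d) = (\<Sum>i\<in>UNIV. d$i * (\<Sum>j\<in>UNIV. sor_B A \<omega> \<theta> $ i $ j * d$j))"
      unfolding inner_vec_def matrix_vector_mult_def by simp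
    also have "\<dots> = (\<Sum>i\<in>UNIV. d$i * ((\<Sum>j\<in>UNIV. if j < i then A$i$j * d$j else 0) + (A$i$i + \<theta>)/\<omega> * d$i))"
      unfolding row ..
    also have "\<dots> = (\<Sum>i\<in>UNIV. (\<Sum>j\<in>UNIV. if j < i then F i j else 0) + (A$i$i + \<theta>)/\<omega> * (d$i)^2)"
    proof (rule sum.cong[OF refl])
      fix i
      have "d$i * (\<Sum>j\<in>UNIV. if j < i then A$i$j * d$j else 0) = (\<Sum>j\<in>UNIV. if j < i then F i j else 0)"
        unfolding sum_distrib_left F_def by (rule sum.cong) (auto simp: mult_ac)
      thus "d$i * ((\<Sum>j\<in>UNIV. if j < i then A$i$j * d$j else 0) + (A$i$i + \<theta>)/\<omega> * d$i) = (\<Sum>j\<in>UNIV. if j < i then F i j else 0) + (A$i$i + \<theta>)/\<omega> * (d$i)^2"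
        by (simp add: distrib_left power2_eq_square mult_ac)
    qed
    finally show ?thesis unfolding Slt_def by (simp add: sum.distrib)
  qed
  have Aii: "A$i$i \<ge> 0" for i
  proof -
    have "0 \<le> inner (axis i 1) (A *v axis i 1)" using psd by blast
    also have "inner (axis i 1) (A *v axis i 1) = A$i$i"
    proof -
      have "(A *v axis i 1) $ i = A$i$i"
        by (simp add: matrix_vector_mult_def axis_def if_distrib sum.delta cong: if_cong)
      thus ?thesis by (simp add: inner_axis')
    qed
    finally show ?thesis .
  qed
  obtain k where k: "d$k \<noteq> 0" using dnz by (metis vec_eq_iff zero_index)
  have coef: "(2/\<omega>) * (A$i$i + \<theta>) - A$i$i > 0" for i
  proof -
    have "2/\<omega> > 1" using omega by (simp add: field_simps)
    hence "(2/\<omega> - 1) * (A$i$i + \<theta>) > 0" using diagpos by simp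
    moreover have "(2/\<omega> - 1) * (A$i$i + \<theta>) \<le> (2/\<omega>) * (A$i$i + \<theta>) - A$i$i"
      using theta by (simp add: algebra_simps)
    ultimately show ?thesis by linarith
  qed
  have pos: "(\<Sum>i\<in>UNIV. ((2/\<omega>) * (A$i$i + \<theta>) - A$i$i) * (d$i)^2) > 0"
  proof (rule sum_pos2[of UNIV k])
    show "0 < ((2/\<omega>) * (A$k$k + \<theta>) - A$k$k) * (d$k)^2" using coef[of k] k by simp
    fix i show "0 \<le> ((2/\<omega>) * (A$i$i + \<theta>) - A$i$i) * (d$i)^2"
      using coef[of i] by (intro mult_nonneg_nonneg) auto
  qed auto
  have "2 * inner d (sor_B A \<omega> \<theta> *v d) = inner d (A *v d) + (\<Sum>i\<in>UNIV. ((2/\<omega>) * (A$i$i + \<theta>) - A$i$i) * (d$i)^2)"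
    unfolding hB hA2 by (simp add: algebra_simps sum.distrib sum_subtractf sum_distrib_left add_divide_distrib)
  thus ?thesis using pos psd by (smt (verit))
qed


lemma A_split:
  fixes A :: "real^('n::{finite,linorder})^('n::{finite,linorder})"
  assumes sym: "transpose A = A" and om: "\<omega> \<noteq> 0"
  shows "sor_B A \<omega> \<theta> + sor_C A \<omega> \<theta> = A"
proof -
  have symij: "A$j$i = A$i$j" for i j
    using sym by (metis transpose_def vec_lambda_beta)
  show ?thesis
    unfolding vec_eq_iff
  proof (intro allI)
    fix i j
    show "(sor_B A \<omega> \<theta> + sor_C A \<omega> \<theta>) $ i $ j = A $ i $ j"
      using om symij[of i j]
      by (cases "j < i"; cases "i < j"; cases "i = j")
         (auto simp: sor_B_def sor_C_def strict_lower_def diag_part_def mat_def transpose_def field_simps)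
  qed
qed

lemma sym_inner:
  fixes A :: "real^('n::{finite,linorder})^('n::{finite,linorder})"
  assumes sym: "transpose A = A"
  shows "inner z (A *v x) = inner x (A *v z)"
proof -
  have "inner x (A *v z) = inner (x v* A) z" by (simp add: dot_lmul_matrix)
  also have "x v* A = A *v x" using sym by (metis transpose_matrix_vector)
  finally show ?thesis by (simp add: inner_commute)
qed

lemma T_unique:
  fixes A :: "real^('n::{finite,linorder})^('n::{finite,linorder})" and c :: "real^('n::{finite,linorder})"
  assumes sym: "transpose A = A"
    and psd: "\<forall>x. 0 \<le> inner x (A *v x)"
    and proper: "proper_fun \<phi>"
    and omega: "0 < \<omega>" "\<omega> < 2"
    and theta: "0 \<le> \<theta>"
    and diagpos: "\<forall>i. A $ i $ i + \<theta> > 0"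
    and z1: "- (sor_B A \<omega> \<theta> *v z1 + c) \<in> subdiff (sep_fun \<phi>) z1"
    and z2: "- (sor_B A \<omega> \<theta> *v z2 + c) \<in> subdiff (sep_fun \<phi>) z2"
  shows "z1 = z2"
proof (rule ccontr)
  assume ne: "z1 \<noteq> z2"
  define B where "B = sor_B A \<omega> \<theta>"
  define v1 where "v1 = - (B *v z1 + c)"
  define v2 where "v2 = - (B *v z2 + c)"
  obtain r1 where r1: "sep_fun \<phi> z1 = ereal r1" using sep_subdiff_fin[OF proper z1] by blast
  obtain r2 where r2: "sep_fun \<phi> z2 = ereal r2" using sep_subdiff_fin[OF proper z2] by blast
  have "sep_fun \<phi> z1 + ereal (inner v1 (z2 - z1)) \<le> sep_fun \<phi> z2"
    using z1 unfolding subdiff_def v1_def B_def by blast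
  hence i1: "r1 + inner v1 (z2 - z1) \<le> r2" using r1 r2 by simp
  have "sep_fun \<phi> z2 + ereal (inner v2 (z1 - z2)) \<le> sep_fun \<phi> z1"
    using z2 unfolding subdiff_def v2_def B_def by blast
  hence i2: "r2 + inner v2 (z1 - z2) \<le> r1" using r1 r2 by simp
  define d where "d = z1 - z2"
  have "inner v1 (z2 - z1) + inner v2 (z1 - z2) = inner d (B *v d)"
    unfolding v1_def v2_def d_def
    by (simp add: inner_diff_left inner_diff_right inner_add_left inner_add_right
        matrix_vector_mult_diff_distrib inner_commute algebra_simps)
  hence "inner d (B *v d) \<le> 0" using i1 i2 by linarith
  moreover have "d \<noteq> 0" using ne d_def by simp
  hence "inner d (B *v d) > 0" unfolding B_def
    using B_posdef[OF sym psd omega theta diagpos] by blast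
  ultimately show False by simp
qed


lemma T_spec:
  fixes A :: "real^('n::{finite,linorder})^('n::{finite,linorder})" and b x :: "real^('n::{finite,linorder})"
  assumes sym: "transpose A = A"
    and psd: "\<forall>x. 0 \<le> inner x (A *v x)"
    and proper: "proper_fun \<phi>" and lsc: "lsc_fun \<phi>" and cvx: "convex_ext \<phi>"
    and omega: "0 < \<omega>" "\<omega> < 2"
    and theta: "0 \<le> \<theta>"
    and diagpos: "\<forall>i. A $ i $ i + \<theta> > 0"
  shows "- (sor_B A \<omega> \<theta> *v sor_T A b \<phi> \<omega> \<theta> x + b + sor_C A \<omega> \<theta> *v x) \<in> subdiff (sep_fun \<phi>) (sor_T A b \<phi> \<omega> \<theta> x)"
proof -
  define c where "c = b + sor_C A \<omega> \<theta> *v x"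
  have eq: "sor_B A \<omega> \<theta> *v z + b + sor_C A \<omega> \<theta> *v x = sor_B A \<omega> \<theta> *v z + c" for z
    unfolding c_def by (simp add: add.assoc)
  have "\<exists>!z. - (sor_B A \<omega> \<theta> *v z + c) \<in> subdiff (sep_fun \<phi>) z"
  proof (rule ex_ex1I)
    show "\<exists>z. - (sor_B A \<omega> \<theta> *v z + c) \<in> subdiff (sep_fun \<phi>) z"
      using T_exists[OF proper lsc cvx omega(1) diagpos] by blast
  next
    fix z1 z2
    assume "- (sor_B A \<omega> \<theta> *v z1 + c) \<in> subdiff (sep_fun \<phi>) z1"
      "- (sor_B A \<omega> \<theta> *v z2 + c) \<in> subdiff (sep_fun \<phi>) z2"
    thus "z1 = z2" by (rule T_unique[OF sym psd proper omega theta diagpos])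
  qed
  hence "- (sor_B A \<omega> \<theta> *v (THE z. - (sor_B A \<omega> \<theta> *v z + c) \<in> subdiff (sep_fun \<phi>) z) + c)
     \<in> subdiff (sep_fun \<phi>) (THE z. - (sor_B A \<omega> \<theta> *v z + c) \<in> subdiff (sep_fun \<phi>) z)"
    by (rule theI')
  thus ?thesis unfolding sor_T_def eq .
qed

theorem lemma1:
  fixes A :: "real^('n::{finite,linorder})^('n::{finite,linorder})" and b :: "real^('n::{finite,linorder})"
    and \<phi> :: "real \<Rightarrow> ereal" and \<omega> \<theta> :: real
  assumes sym: "transpose A = A"
    and psd: "\<forall>x. 0 \<le> inner x (A *v x)"
    and proper: "proper_fun \<phi>" and lsc: "lsc_fun \<phi>" and cvx: "convex_ext \<phi>"
    and omega: "0 < \<omega>" "\<omega> < 2"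
    and theta: "0 \<le> \<theta>"
    and diagpos: "\<forall>i. A $ i $ i + \<theta> > 0"
  shows "\<forall>x y :: real^('n::{finite,linorder}).
    (\<exists>v \<in> subdiff (sep_fun \<phi>) (sor_T A b \<phi> \<omega> \<theta> x).
       norm (A *v sor_T A b \<phi> \<omega> \<theta> x + b + v)
         \<le> onorm (\<lambda>u. sor_C A \<omega> \<theta> *v u) * norm (x - sor_T A b \<phi> \<omega> \<theta> x))
    \<and> obj_f A b \<phi> (sor_T A b \<phi> \<omega> \<theta> y) - obj_f A b \<phi> x
        \<le> ereal (inner (sor_T A b \<phi> \<omega> \<theta> y - x) (sor_C A \<omega> \<theta> *v (sor_T A b \<phi> \<omega> \<theta> y - y))
           - 1/2 * inner (x - sor_T A b \<phi> \<omega> \<theta> y) (A *v (x - sor_T A b \<phi> \<omega> \<theta> y)))"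
proof (intro allI conjI)
  fix x y :: "real^('n::{finite,linorder})"
  define B where "B = sor_B A \<omega> \<theta>"
  define C where "C = sor_C A \<omega> \<theta>"
  have AB: "A = B + C" unfolding B_def C_def using A_split[OF sym, of \<omega> \<theta>] omega by simp
  have ninf: "\<And>t. \<phi> t \<noteq> -\<infinity>" using proper unfolding proper_fun_def by blast
  note spec = T_spec[OF sym psd proper lsc cvx omega theta diagpos]
  define z where "z = sor_T A b \<phi> \<omega> \<theta> x"
  define v where "v = - (B *v z + b + C *v x)"
  have vin: "v \<in> subdiff (sep_fun \<phi>) z" using spec[of b x] unfolding v_def z_def B_def C_def .
  have "A *v z + b + v = C *v (z - x)" unfolding v_def AB
    by (simp add: matrix_vector_mult_add_rdistrib matrix_vector_mult_diff_distrib algebra_simps)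
  hence "norm (A *v z + b + v) = norm (C *v (z - x))" by simp
  also have "\<dots> \<le> onorm (\<lambda>u. C *v u) * norm (z - x)"
    by (rule onorm) simp
  also have "norm (z - x) = norm (x - z)" by (rule norm_minus_commute)
  finally show "\<exists>v \<in> subdiff (sep_fun \<phi>) (sor_T A b \<phi> \<omega> \<theta> x).
       norm (A *v sor_T A b \<phi> \<omega> \<theta> x + b + v)
         \<le> onorm (\<lambda>u. sor_C A \<omega> \<theta> *v u) * norm (x - sor_T A b \<phi> \<omega> \<theta> x)"
    using vin unfolding z_def C_def by blast
next
  fix x y :: "real^('n::{finite,linorder})"
  define B where "B = sor_B A \<omega> \<theta>"
  define C where "C = sor_C A \<omega> \<theta>"
  have AB: "A = B + C" unfolding B_def C_def using A_split[OF sym, of \<omega> \<theta>] omega by simp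
  have ninf: "\<And>t. \<phi> t \<noteq> -\<infinity>" using proper unfolding proper_fun_def by blast
  note spec = T_spec[OF sym psd proper lsc cvx omega theta diagpos]
  define z where "z = sor_T A b \<phi> \<omega> \<theta> y"
  define v where "v = - (B *v z + b + C *v y)"
  have vin: "v \<in> subdiff (sep_fun \<phi>) z" using spec[of b y] unfolding v_def z_def B_def C_def .
  obtain r where r: "sep_fun \<phi> z = ereal r" using sep_subdiff_fin[OF proper vin] by blast
  have sub: "sep_fun \<phi> z + ereal (inner v (x - z)) \<le> sep_fun \<phi> x" using vin unfolding subdiff_def by blast
  define q where "q w = 1/2 * inner w (A *v w) + inner w b" for w
  have Av: "A *v z + b + v = C *v (z - y)" unfolding v_def AB
    by (simp add: matrix_vector_mult_add_rdistrib matrix_vector_mult_diff_distrib algebra_simps)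
  have sx: "inner z (A *v x) = inner x (A *v z)" by (rule sym_inner[OF sym])
  have qid: "q z - q x = inner (z - x) (A *v z + b) - 1/2 * inner (x - z) (A *v (x - z))"
    unfolding q_def using sx
    by (simp add: inner_diff_left inner_diff_right inner_add_right matrix_vector_mult_diff_distrib algebra_simps)
  define RHS where "RHS = inner (z - x) (C *v (z - y)) - 1/2 * inner (x - z) (A *v (x - z))"
  have "obj_f A b \<phi> z - obj_f A b \<phi> x \<le> ereal RHS"
  proof (cases "sep_fun \<phi> x")
    case PInf
    thus ?thesis unfolding obj_f_def using r by simp
  next
    case MInf
    thus ?thesis using sep_ninf[of \<phi> x, OF ninf] by simp
  next
    case (real s)
    have i1: "r + inner v (x - z) \<le> s" using sub r real by simp
    have "q z + r - (q x + s) \<le> RHS"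
    proof -
      have "inner (z - x) (A *v z + b) + inner v (z - x) = inner (z - x) (C *v (z - y))"
        using Av by (metis inner_add_left inner_commute)
      moreover have "inner v (x - z) = - inner v (z - x)" by (simp add: inner_diff_right)
      ultimately show ?thesis using qid i1 unfolding RHS_def by linarith
    qed
    thus ?thesis unfolding obj_f_def q_def[symmetric] using r real by simp
  qed
  thus "obj_f A b \<phi> (sor_T A b \<phi> \<omega> \<theta> y) - obj_f A b \<phi> x
        \<le> ereal (inner (sor_T A b \<phi> \<omega> \<theta> y - x) (sor_C A \<omega> \<theta> *v (sor_T A b \<phi> \<omega> \<theta> y - y))
           - 1/2 * inner (x - sor_T A b \<phi> \<omega> \<theta> y) (A *v (x - sor_T A b \<phi> \<omega> \<theta> y)))"
    unfolding RHS_def z_def C_def .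
qed

end
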